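(* For every $m\ge2$, let $C=C_{2m}(1,1)=J_{2m}+E_{m-1,m+1}-E_{m,m+2}\in M_{2m}$. Then for all $\theta\in\mathbb{R}$ and $u\in\mathbb{C}$, $$\det\bigl(uI-H_C(\theta)\bigr)=2^{-2m}\bigl(U_m(u)-U_{m-1}(u)-U_{m-2}(u)\bigr)\bigl(U_m(u)+U_{m-1}(u)-U_{m-2}(u)\bigr).$$ In particular $C_{2m}(1,1)$ has the Circularity property.
   Context: $J_n$ is the $n\times n$ nilpotent Jordan block (ones on the first superdiagonal, zeros elsewhere); $E_{a,b}$ is the matrix unit with $1$ in position $(a,b)$ and zeros elsewhere. $H_X(\theta)=\frac12(e^{-i\theta}X+e^{i\theta}X^* )$; $X$ has the Circularity property if the spectrum of $H_X(\theta)$ is independent of $\theta$. $U_k$ are Chebyshev polynomials of the second kind: $U_{-1}=0$, $U_0=1$, $U_{k+1}(u)=2uU_k(u)-U_{k-1}(u)$. *)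

theory Defs
  imports Complex_Main "Jordan_Normal_Form.Determinant" "Jordan_Normal_Form.Char_Poly"
begin

(* 0-based indexing: entry (i,j) of an n x n matrix has 0 <= i,j < n. *)

definition conj_tr :: "complex mat \<Rightarrow> complex mat" where
  "conj_tr X = mat (dim_col X) (dim_row X) (\<lambda>(i,j). cnj (X $$ (j,i)))"

definition H_mat :: "complex mat \<Rightarrow> real \<Rightarrow> complex mat" where
  "H_mat X \<theta> = (1/2 :: complex) \<cdot>\<^sub>m
      (exp (- \<i> * of_real \<theta>) \<cdot>\<^sub>m X + exp (\<i> * of_real \<theta>) \<cdot>\<^sub>m conj_tr X)"

definition mat_spectrum :: "complex mat \<Rightarrow> complex set" where
  "mat_spectrum A = {k. eigenvalue A k}"

definition circularity :: "complex mat \<Rightarrow> bool" where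
  "circularity X \<longleftrightarrow> (\<forall>\<theta>1 \<theta>2. mat_spectrum (H_mat X \<theta>1) = mat_spectrum (H_mat X \<theta>2))"

(* Chebyshev polynomials of the second kind: U_0 = 1, U_1 = 2u (= 2u U_0 - U_{-1} with U_{-1}=0) *)
fun chebU :: "nat \<Rightarrow> complex \<Rightarrow> complex" where
  "chebU 0 u = 1"
| "chebU (Suc 0) u = 2 * u"
| "chebU (Suc (Suc k)) u = 2 * u * chebU (Suc k) u - chebU k u"

definition jordan_nil :: "nat \<Rightarrow> complex mat" where
  "jordan_nil n = mat n n (\<lambda>(i,j). if j = i + 1 then 1 else 0)"

(* matrix unit E_{a,b} of size n, 1-based indices a,b as in the paper *)
definition mat_unit :: "nat \<Rightarrow> nat \<Rightarrow> nat \<Rightarrow> complex mat" where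
  "mat_unit n a b = mat n n (\<lambda>(i,j). if i + 1 = a \<and> j + 1 = b then 1 else 0)"

definition C_mat :: "nat \<Rightarrow> complex mat" where
  "C_mat m = jordan_nil (2*m) + mat_unit (2*m) (m-1) (m+1) - mat_unit (2*m) m (m+2)"

end

theory Submission
  imports Defs
begin

definition sub :: "'a mat \<Rightarrow> nat \<Rightarrow> nat \<Rightarrow> 'a mat" where
  "sub A k l = mat l l (\<lambda>(i,j). A $$ (i+k, j+k))"

lemma sub_carrier[simp]: "sub A k l \<in> carrier_mat l l" by (simp add: sub_def)

lemma det_row0:
  assumes A: "(A :: 'a :: comm_ring_1 mat) \<in> carrier_mat (Suc n) (Suc n)"
    and z: "\<And>j. 0 < j \<Longrightarrow> j < Suc n \<Longrightarrow> A $$ (0,j) = 0"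
  shows "det A = A $$ (0,0) * det (mat_delete A 0 0)"
proof -
  have "det A = (\<Sum>j<Suc n. A $$ (0,j) * cofactor A 0 j)"
    by (rule laplace_expansion_row[OF A], simp)
  also have "\<dots> = (\<Sum>j\<in>{0}. A $$ (0,j) * cofactor A 0 j)"
    by (rule sum.mono_neutral_right, auto simp: z)
  finally show ?thesis by (simp add: cofactor_def)
qed

lemma det_rowlast:
  assumes A: "(A :: 'a :: comm_ring_1 mat) \<in> carrier_mat (Suc n) (Suc n)"
    and z: "\<And>j. j < n \<Longrightarrow> A $$ (n,j) = 0"
  shows "det A = A $$ (n,n) * det (mat_delete A n n)"
proof -
  have "det A = (\<Sum>j<Suc n. A $$ (n,j) * cofactor A n j)"
    by (rule laplace_expansion_row[OF A], simp)
  also have "\<dots> = (\<Sum>j\<in>{n}. A $$ (n,j) * cofactor A n j)"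
    by (rule sum.mono_neutral_right, auto simp: z)
  finally show ?thesis by (simp add: cofactor_def)
qed

lemma top_rec:
  fixes A :: "'a :: comm_ring_1 mat"
  assumes z: "\<And>j. 2 \<le> j \<Longrightarrow> j < Suc (Suc n) \<Longrightarrow> A $$ (k,j+k) = 0 \<and> A $$ (j+k,k) = 0"
  shows "det (sub A k (Suc (Suc n))) = A $$ (k,k) * det (sub A (Suc k) (Suc n))
      - A $$ (k,Suc k) * A $$ (Suc k,k) * det (sub A (Suc (Suc k)) n)"
proof -
  let ?B = "sub A k (Suc (Suc n))"
  have B: "?B \<in> carrier_mat (Suc (Suc n)) (Suc (Suc n))" by simp
  have "det ?B = (\<Sum>i<Suc (Suc n). ?B $$ (i,0) * cofactor ?B i 0)"
    by (rule laplace_expansion_column[OF B], simp)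
  also have "\<dots> = (\<Sum>i\<in>{0,1}. ?B $$ (i,0) * cofactor ?B i 0)"
  proof (rule sum.mono_neutral_right)
    show "\<forall>i\<in>{..<Suc (Suc n)} - {0,1}. ?B $$ (i,0) * cofactor ?B i 0 = 0"
    proof
      fix i assume "i \<in> {..<Suc (Suc n)} - {0,1}"
      then show "?B $$ (i,0) * cofactor ?B i 0 = 0" using z[of i] by (simp add: sub_def)
    qed
  qed auto
  also have "\<dots> = A $$ (k,k) * det (mat_delete ?B 0 0) - A $$ (Suc k,k) * det (mat_delete ?B 1 0)"
    by (simp add: cofactor_def sub_def)
  also have "mat_delete ?B 0 0 = sub A (Suc k) (Suc n)"
    by (rule eq_matI, auto simp: mat_delete_def sub_def)
  also have "det (mat_delete ?B 1 0) = A $$ (k, Suc k) * det (sub A (Suc (Suc k)) n)"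
  proof -
    let ?D = "mat_delete ?B 1 0"
    have D: "?D \<in> carrier_mat (Suc n) (Suc n)" using mat_delete_carrier[OF B] by simp
    have "det ?D = ?D $$ (0,0) * det (mat_delete ?D 0 0)"
    proof (rule det_row0[OF D])
      fix j assume "0 < j" "j < Suc n"
      then show "?D $$ (0,j) = 0" using z[of "Suc j"] by (simp add: mat_delete_def sub_def)
    qed
    also have "mat_delete ?D 0 0 = sub A (Suc (Suc k)) n"
      by (rule eq_matI, auto simp: mat_delete_def sub_def)
    finally show ?thesis by (simp add: mat_delete_def sub_def)
  qed
  finally show ?thesis by (simp add: algebra_simps)
qed

lemma bot_rec:
  fixes A :: "'a :: comm_ring_1 mat"
  assumes z: "\<And>j. j < n \<Longrightarrow> A $$ (Suc n+k,j+k) = 0 \<and> A $$ (j+k,Suc n+k) = 0"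
  shows "det (sub A k (Suc (Suc n))) = A $$ (Suc n+k,Suc n+k) * det (sub A k (Suc n))
      - A $$ (n+k,Suc n+k) * A $$ (Suc n+k,n+k) * det (sub A k n)"
proof -
  let ?B = "sub A k (Suc (Suc n))"
  have B: "?B \<in> carrier_mat (Suc (Suc n)) (Suc (Suc n))" by simp
  have "det ?B = (\<Sum>i<Suc (Suc n). ?B $$ (i,Suc n) * cofactor ?B i (Suc n))"
    by (rule laplace_expansion_column[OF B], simp)
  also have "\<dots> = (\<Sum>i\<in>{n,Suc n}. ?B $$ (i,Suc n) * cofactor ?B i (Suc n))"
  proof (rule sum.mono_neutral_right)
    show "\<forall>i\<in>{..<Suc (Suc n)} - {n,Suc n}. ?B $$ (i,Suc n) * cofactor ?B i (Suc n) = 0"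
    proof
      fix i assume "i \<in> {..<Suc (Suc n)} - {n,Suc n}"
      then show "?B $$ (i,Suc n) * cofactor ?B i (Suc n) = 0" using z[of i] by (simp add: sub_def)
    qed
  qed auto
  also have "\<dots> = A $$ (Suc n+k,Suc n+k) * det (mat_delete ?B (Suc n) (Suc n)) - A $$ (n+k,Suc n+k) * det (mat_delete ?B n (Suc n))"
    by (simp add: cofactor_def sub_def)
  also have "mat_delete ?B (Suc n) (Suc n) = sub A k (Suc n)"
    by (rule eq_matI, auto simp: mat_delete_def sub_def)
  also have "det (mat_delete ?B n (Suc n)) = A $$ (Suc n+k, n+k) * det (sub A k n)"
  proof -
    let ?D = "mat_delete ?B n (Suc n)"
    have D: "?D \<in> carrier_mat (Suc n) (Suc n)" using mat_delete_carrier[OF B] by simp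
    have "det ?D = ?D $$ (n,n) * det (mat_delete ?D n n)"
    proof (rule det_rowlast[OF D])
      fix j assume "j < n"
      then show "?D $$ (n,j) = 0" using z[of j] by (simp add: mat_delete_def sub_def)
    qed
    also have "mat_delete ?D n n = sub A k n"
      by (rule eq_matI, auto simp: mat_delete_def sub_def)
    finally show ?thesis by (simp add: mat_delete_def sub_def)
  qed
  finally show ?thesis by (simp add: algebra_simps)
qed


lemma det_mat2: "det (mat 2 2 g) = (g (0,0) * g (1,1) - g (0,1) * g (1,0) :: 'a :: comm_ring_1)"
proof -
  have A: "(mat 2 2 g :: 'a mat) \<in> carrier_mat 2 2" by simp
  show ?thesis
    apply (subst laplace_expansion_row[OF A, of 0], simp)
    by (simp add: numeral_2_eq_2 cofactor_def mat_delete_def det_single lessThan_Suc)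
qed

lemma det_mat3: "det (mat 3 3 g) = (g (0,0) * (g (1,1) * g (2,2) - g (1,2) * g (2,1))
   - g (0,1) * (g (1,0) * g (2,2) - g (1,2) * g (2,0))
   + g (0,2) * (g (1,0) * g (2,1) - g (1,1) * g (2,0)) :: 'a :: comm_ring_1)"
proof -
  have A: "(mat 3 3 g :: 'a mat) \<in> carrier_mat 3 3" by simp
  have e: "{..<3::nat} = {0,1,2}" by auto
  show ?thesis
    apply (subst laplace_expansion_row[OF A, of 0], simp)
    apply (simp add: e cofactor_def mat_delete_def det_mat2)
    by (simp add: numeral_2_eq_2 algebra_simps)
qed


lemma det_mat4: "det (mat 4 4 g) = (
     g (0,0) * det (mat 3 3 (\<lambda>(i,j). g (Suc i, Suc j)))
   - g (0,1) * det (mat 3 3 (\<lambda>(i,j). g (Suc i, if j < 1 then j else Suc j)))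
   + g (0,2) * det (mat 3 3 (\<lambda>(i,j). g (Suc i, if j < 2 then j else Suc j)))
   - g (0,3) * det (mat 3 3 (\<lambda>(i,j). g (Suc i, j))) :: 'a :: comm_ring_1)"
proof -
  have A: "(mat 4 4 g :: 'a mat) \<in> carrier_mat 4 4" by simp
  have e: "{..<4::nat} = {0,1,2,3}" by auto
  have d: "\<And>j. j < 4 \<Longrightarrow> mat_delete (mat 4 4 g) 0 j = mat 3 3 (\<lambda>(i',j'). g (Suc i', if j' < j then j' else Suc j'))"
    by (rule eq_matI, auto simp: mat_delete_def)
  have d3: "mat 3 3 (\<lambda>(i',j'). g (Suc i', if j' < 3 then j' else Suc j')) = mat 3 3 (\<lambda>(i,j). g (Suc i, j))"
    by (rule eq_matI, auto)
  have d0: "mat 3 3 (\<lambda>(i',j'). g (Suc i', if j' < 0 then j' else Suc j')) = mat 3 3 (\<lambda>(i,j). g (Suc i, Suc j))"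
    by (rule eq_matI, auto)
  show ?thesis
    apply (subst laplace_expansion_row[OF A, of 0], simp)
    apply (simp add: e cofactor_def d d3 del: One_nat_def)
    done
qed


fun pp :: "complex \<Rightarrow> nat \<Rightarrow> complex" where
  "pp u 0 = 0"
| "pp u (Suc j) = chebU j u / 2 ^ j"

lemma pp_rec: "pp u (Suc (Suc j)) = u * pp u (Suc j) - pp u j / 4"
proof (cases j)
  case 0 then show ?thesis by simp
next
  case (Suc i)
  then show ?thesis by (simp add: field_simps)
qed

lemma top_chain:
  fixes A :: "complex mat"
  assumes tl: "t < l"
    and ch: "\<And>i. k \<le> i \<Longrightarrow> i < k + t \<Longrightarrow> A $$ (i,i) = u \<and> A $$ (i,Suc i) * A $$ (Suc i,i) = 1/4
       \<and> (\<forall>j. 2 \<le> j \<longrightarrow> j + i < k + l \<longrightarrow> A $$ (i,j+i) = 0 \<and> A $$ (j+i,i) = 0)"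
  shows "det (sub A k l) = pp u (Suc t) * det (sub A (k+t) (l-t))
           - pp u t / 4 * det (sub A (Suc (k+t)) (l - Suc t))"
proof -
  have "s \<le> t \<Longrightarrow> det (sub A k l) = pp u (Suc s) * det (sub A (k+s) (l-s))
           - pp u s / 4 * det (sub A (Suc (k+s)) (l - Suc s))" for s
  proof (induction s)
    case 0 then show ?case by simp
  next
    case (Suc s)
    have sl: "Suc s < l" using Suc.prems tl by simp
    obtain r where r: "l - s = Suc (Suc r)" using sl
      by (metis Suc_diff_Suc Suc_lessD zero_less_diff less_imp_Suc_add add_Suc_right diff_add_inverse)
    have c: "A $$ (k+s,k+s) = u \<and> A $$ (k+s,Suc (k+s)) * A $$ (Suc (k+s),k+s) = 1/4
       \<and> (\<forall>j. 2 \<le> j \<longrightarrow> j + (k+s) < k + l \<longrightarrow> A $$ (k+s,j+(k+s)) = 0 \<and> A $$ (j+(k+s),k+s) = 0)"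
      using ch[of "k+s"] Suc.prems by simp
    have rec: "det (sub A (k+s) (Suc (Suc r))) = A $$ (k+s,k+s) * det (sub A (Suc (k+s)) (Suc r))
      - A $$ (k+s,Suc (k+s)) * A $$ (Suc (k+s),k+s) * det (sub A (Suc (Suc (k+s))) r)"
      by (rule top_rec) (use c r in auto)
    have IH: "det (sub A k l) = pp u (Suc s) * det (sub A (k+s) (l-s))
           - pp u s / 4 * det (sub A (Suc (k+s)) (l - Suc s))" using Suc by simp
    have e1: "l - Suc s = Suc r" "l - Suc (Suc s) = r" using r by auto
    have rec': "det (sub A (k+s) (l-s)) = u * det (sub A (Suc (k+s)) (l - Suc s)) - det (sub A (Suc (Suc (k+s))) (l - Suc (Suc s))) / 4"
      unfolding r e1 rec using c by (simp add: mult.assoc)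
    show ?case unfolding IH rec' pp_rec
      by (simp add: algebra_simps del: pp.simps)
  qed
  then show ?thesis by simp
qed

lemma bot_chain:
  fixes A :: "complex mat"
  assumes tl: "t < l"
    and ch: "\<And>r. l - t < Suc (Suc r) \<Longrightarrow> Suc (Suc r) \<le> l \<Longrightarrow> A $$ (Suc r+k,Suc r+k) = u
       \<and> A $$ (r+k,Suc r+k) * A $$ (Suc r+k,r+k) = 1/4
       \<and> (\<forall>j<r. A $$ (Suc r+k,j+k) = 0 \<and> A $$ (j+k,Suc r+k) = 0)"
  shows "det (sub A k l) = pp u (Suc t) * det (sub A k (l-t))
           - pp u t / 4 * det (sub A k (l - Suc t))"
proof -
  have "s \<le> t \<Longrightarrow> det (sub A k l) = pp u (Suc s) * det (sub A k (l-s))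
           - pp u s / 4 * det (sub A k (l - Suc s))" for s
  proof (induction s)
    case 0 then show ?case by simp
  next
    case (Suc s)
    have sl: "Suc s < l" using Suc.prems tl by simp
    obtain r where r: "l - s = Suc (Suc r)" using sl
      by (metis Suc_diff_Suc Suc_lessD zero_less_diff less_imp_Suc_add add_Suc_right diff_add_inverse)
    have c: "A $$ (Suc r+k,Suc r+k) = u
       \<and> A $$ (r+k,Suc r+k) * A $$ (Suc r+k,r+k) = 1/4
       \<and> (\<forall>j<r. A $$ (Suc r+k,j+k) = 0 \<and> A $$ (j+k,Suc r+k) = 0)"
      by (rule ch[of r]) (use Suc.prems r tl in auto)
    have rec: "det (sub A k (Suc (Suc r))) = A $$ (Suc r+k,Suc r+k) * det (sub A k (Suc r))
      - A $$ (r+k,Suc r+k) * A $$ (Suc r+k,r+k) * det (sub A k r)"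
      by (rule bot_rec) (use c in auto)
    have IH: "det (sub A k l) = pp u (Suc s) * det (sub A k (l-s))
           - pp u s / 4 * det (sub A k (l - Suc s))" using Suc by simp
    have e1: "l - Suc s = Suc r" "l - Suc (Suc s) = r" using r by auto
    have rec': "det (sub A k (l-s)) = u * det (sub A k (l - Suc s)) - det (sub A k (l - Suc (Suc s))) / 4"
      unfolding r e1 rec using c by (simp add: mult.assoc)
    show ?case unfolding IH rec' pp_rec
      by (simp add: algebra_simps del: pp.simps)
  qed
  then show ?thesis by simp
qed


definition Cf :: "nat \<Rightarrow> nat \<Rightarrow> nat \<Rightarrow> complex" where
  "Cf p i j = (if j = Suc i then 1 else 0) + (if i = p \<and> j = p+2 then 1 else 0) - (if i = p+1 \<and> j = p+3 then 1 else 0)"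

lemma cnj_Cf[simp]: "cnj (Cf p i j) = Cf p i j"
  by (simp add: Cf_def)

lemma C_entry: "i < 2 * Suc (Suc p) \<Longrightarrow> j < 2 * Suc (Suc p) \<Longrightarrow> C_mat (Suc (Suc p)) $$ (i,j) = Cf p i j"
  by (simp add: C_mat_def jordan_nil_def mat_unit_def Cf_def)

lemma C_dim[simp]: "dim_row (C_mat m) = 2*m" "dim_col (C_mat m) = 2*m"
  by (simp_all add: C_mat_def jordan_nil_def mat_unit_def)

lemma M_entry:
  assumes "i < 2 * Suc (Suc p)" "j < 2 * Suc (Suc p)"
  shows "(u \<cdot>\<^sub>m 1\<^sub>m (2 * Suc (Suc p)) - H_mat (C_mat (Suc (Suc p))) \<theta>) $$ (i,j)
     = (if i = j then u else 0) - (exp (- \<i> * of_real \<theta>) * Cf p i j + exp (\<i> * of_real \<theta>) * Cf p j i) / 2"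
  using assms by (simp add: H_mat_def conj_tr_def C_entry del: mult_Suc_right)

lemma ezew: "exp (- (\<i> * complex_of_real \<theta>)) * exp (\<i> * complex_of_real \<theta>) = 1"
  by (simp add: exp_minus)

lemma main_det:
  fixes p :: nat and \<theta> :: real and u :: complex
  defines "M \<equiv> u \<cdot>\<^sub>m 1\<^sub>m (2 * Suc (Suc p)) - H_mat (C_mat (Suc (Suc p))) \<theta>"
  shows "det M = pp u (Suc p) * (pp u (Suc p) * det (sub M p 4) - pp u p / 4 * det (sub M p 3))
     - pp u p / 4 * (pp u (Suc p) * det (sub M (Suc p) 3) - pp u p / 4 * det (sub M (Suc p) 2))"
proof -
  note E = M_entry[of _ p _ u \<theta>, folded M_def]
  have Mc: "M \<in> carrier_mat (2 * Suc (Suc p)) (2 * Suc (Suc p))" unfolding M_def H_mat_def conj_tr_def by auto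
  have s0: "sub M 0 (2 * Suc (Suc p)) = M" using Mc by (intro eq_matI) (auto simp: sub_def)
  have t1: "det (sub M 0 (2 * Suc (Suc p))) = pp u (Suc p) * det (sub M (0+p) (2 * Suc (Suc p) - p))
           - pp u p / 4 * det (sub M (Suc (0+p)) (2 * Suc (Suc p) - Suc p))"
  proof (rule top_chain)
    fix i assume i: "0 \<le> i" "i < 0 + p"
    show "M $$ (i,i) = u \<and> M $$ (i,Suc i) * M $$ (Suc i,i) = 1/4
       \<and> (\<forall>j. 2 \<le> j \<longrightarrow> j + i < 0 + 2 * Suc (Suc p) \<longrightarrow> M $$ (i,j+i) = 0 \<and> M $$ (j+i,i) = 0)"
      using i ezew[of \<theta>] by (simp add: E Cf_def)
  qed simp
  have b1: "det (sub M p (p+4)) = pp u (Suc p) * det (sub M p (p + 4 - p))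
           - pp u p / 4 * det (sub M p (p + 4 - Suc p))"
  proof (rule bot_chain)
    fix r assume r: "p + 4 - p < Suc (Suc r)" "Suc (Suc r) \<le> p + 4"
    show "M $$ (Suc r+p,Suc r+p) = u
       \<and> M $$ (r+p,Suc r+p) * M $$ (Suc r+p,r+p) = 1/4
       \<and> (\<forall>j<r. M $$ (Suc r+p,j+p) = 0 \<and> M $$ (j+p,Suc r+p) = 0)"
      using r ezew[of \<theta>] by (simp add: E Cf_def)
  qed simp
  have b2: "det (sub M (Suc p) (p+3)) = pp u (Suc p) * det (sub M (Suc p) (p + 3 - p))
           - pp u p / 4 * det (sub M (Suc p) (p + 3 - Suc p))"
  proof (rule bot_chain)
    fix r assume r: "p + 3 - p < Suc (Suc r)" "Suc (Suc r) \<le> p + 3"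
    show "M $$ (Suc r+Suc p,Suc r+Suc p) = u
       \<and> M $$ (r+Suc p,Suc r+Suc p) * M $$ (Suc r+Suc p,r+Suc p) = 1/4
       \<and> (\<forall>j<r. M $$ (Suc r+Suc p,j+Suc p) = 0 \<and> M $$ (j+Suc p,Suc r+Suc p) = 0)"
      using r ezew[of \<theta>] by (simp add: E Cf_def)
  qed simp
  have e: "2 * Suc (Suc p) - p = p + 4" "2 * Suc (Suc p) - Suc p = p + 3" by auto
  show ?thesis using t1 b1 b2 unfolding s0 e by simp
qed

lemma chebU_pp: "chebU j u = 2^j * pp u (Suc j)" by simp

lemma Rlem: "(1 / 2 ^ (2 * Suc (Suc p))) * (chebU (Suc (Suc p)) u - chebU (Suc p) u - chebU p u)
                  * (chebU (Suc (Suc p)) u + chebU (Suc p) u - chebU p u)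
     = (pp u (Suc (Suc (Suc p))) - pp u (Suc (Suc p)) / 2 - pp u (Suc p) / 4) * (pp u (Suc (Suc (Suc p))) + pp u (Suc (Suc p)) / 2 - pp u (Suc p) / 4)"
  proof -
    define q :: complex where "q = 2^p"
    define a where "a = pp u (Suc (Suc (Suc p)))"
    define b where "b = pp u (Suc (Suc p))"
    define X where "X = pp u (Suc p)"
    have q0: "q \<noteq> 0" unfolding q_def by simp
    have c1: "chebU (Suc (Suc p)) u = 4*q*a" unfolding a_def q_def by (simp only: pp.simps) simp
    have c2: "chebU (Suc p) u = 2*q*b" unfolding b_def q_def by (simp only: pp.simps) simp
    have c3: "chebU p u = q*X" unfolding X_def q_def by (simp only: pp.simps) simp
    have p2: "(2::complex)^(2*Suc (Suc p)) = 16*q*q" unfolding q_def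
      by (simp add: power_mult power_add algebra_simps power2_eq_square)
    have "(1 / (16*q*q)) * (4*q*a - 2*q*b - q*X) * (4*q*a + 2*q*b - q*X) = (a - b/2 - X/4) * (a + b/2 - X/4)"
      using q0 by (simp add: field_simps)
    then show ?thesis unfolding c1 c2 c3 p2 a_def b_def X_def .
  qed

lemma part1:
  fixes p :: nat and \<theta> :: real and u :: complex
  shows "det (u \<cdot>\<^sub>m 1\<^sub>m (2 * Suc (Suc p)) - H_mat (C_mat (Suc (Suc p))) \<theta>)
    = (1 / 2 ^ (2 * Suc (Suc p))) * (chebU (Suc (Suc p)) u - chebU (Suc p) u - chebU p u)
                  * (chebU (Suc (Suc p)) u + chebU (Suc p) u - chebU p u)"
proof -
  define M where "M = u \<cdot>\<^sub>m 1\<^sub>m (2 * Suc (Suc p)) - H_mat (C_mat (Suc (Suc p))) \<theta>"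
  note E = M_entry[of _ p _ u \<theta>, folded M_def]
  define ez where "ez = exp (- (\<i> * complex_of_real \<theta>))"
  define ew where "ew = exp (\<i> * complex_of_real \<theta>)"
  have ee: "ez * ew = 1" unfolding ez_def ew_def by (rule ezew)
  have ee': "\<And>x. ew * (ez * x) = x" by (metis ee mult.assoc mult.commute mult_1)
  define X where "X = pp u (Suc p)"
  define Y where "Y = pp u p"
  have P3: "pp u (Suc (Suc (Suc p))) = u * (u * X - Y/4) - X/4"
    unfolding X_def Y_def by (simp only: pp_rec)
  have P2: "pp u (Suc (Suc p)) = u * X - Y/4"
    unfolding X_def Y_def by (simp only: pp_rec)
  have R: "(1 / 2 ^ (2 * Suc (Suc p))) * (chebU (Suc (Suc p)) u - chebU (Suc p) u - chebU p u)
                  * (chebU (Suc (Suc p)) u + chebU (Suc p) u - chebU p u)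
     = (pp u (Suc (Suc (Suc p))) - pp u (Suc (Suc p)) / 2 - X / 4) * (pp u (Suc (Suc (Suc p))) + pp u (Suc (Suc p)) / 2 - X / 4)"
    unfolding X_def by (rule Rlem)
  have L: "det M = X * (X * det (sub M p 4) - Y / 4 * det (sub M p 3))
     - Y / 4 * (X * det (sub M (Suc p) 3) - Y / 4 * det (sub M (Suc p) 2))"
    unfolding M_def X_def Y_def by (rule main_det)
  have "det M = (pp u (Suc (Suc (Suc p))) - pp u (Suc (Suc p)) / 2 - X / 4) * (pp u (Suc (Suc (Suc p))) + pp u (Suc (Suc p)) / 2 - X / 4)"
    unfolding L P3 P2 sub_def det_mat4 det_mat3 det_mat2
    apply (simp add: E Cf_def numeral_eq_Suc flip: ez_def ew_def)
    apply (simp add: field_simps)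
    by (simp add: ee')
  then show ?thesis unfolding R M_def .
qed

lemma H_carrier: "H_mat (C_mat m) \<theta> \<in> carrier_mat (2*m) (2*m)"
  unfolding H_mat_def conj_tr_def by auto

lemma eig_det: "eigenvalue (H_mat (C_mat m) \<theta>) k \<longleftrightarrow> det (k \<cdot>\<^sub>m 1\<^sub>m (2*m) - H_mat (C_mat m) \<theta>) = 0"
proof -
  let ?H = "H_mat (C_mat m) \<theta>"
  have Hc: "?H \<in> carrier_mat (2*m) (2*m)" by (rule H_carrier)
  have cm: "char_matrix ?H k = (-1) \<cdot>\<^sub>m (k \<cdot>\<^sub>m 1\<^sub>m (2*m) - ?H)"
    using Hc by (intro eq_matI) (auto simp: char_matrix_def)
  have "det (char_matrix ?H k) = det (k \<cdot>\<^sub>m 1\<^sub>m (2*m) - ?H)"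
    unfolding cm det_smult using Hc by (simp add: power_mult)
  then show ?thesis using eigenvalue_det[OF Hc] by simp
qed

theorem mainTheorem17:
  fixes m :: nat
  assumes "m \<ge> 2"
  shows "(\<forall>(\<theta>::real) (u::complex).
            det (u \<cdot>\<^sub>m 1\<^sub>m (2*m) - H_mat (C_mat m) \<theta>)
              = (1 / 2 ^ (2*m)) * (chebU m u - chebU (m-1) u - chebU (m-2) u)
                  * (chebU m u + chebU (m-1) u - chebU (m-2) u))
         \<and> circularity (C_mat m)"
proof -
  obtain p where p: "m = Suc (Suc p)" using assms by (metis add_2_eq_Suc le_Suc_ex)
  have P1: "\<forall>(\<theta>::real) (u::complex).
            det (u \<cdot>\<^sub>m 1\<^sub>m (2*m) - H_mat (C_mat m) \<theta>)
              = (1 / 2 ^ (2*m)) * (chebU m u - chebU (m-1) u - chebU (m-2) u)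
                  * (chebU m u + chebU (m-1) u - chebU (m-2) u)"
    unfolding p using part1 by simp
  have "circularity (C_mat m)"
    unfolding circularity_def mat_spectrum_def
  proof (intro allI)
    fix t1 t2 :: real
    show "{k. eigenvalue (H_mat (C_mat m) t1) k} = {k. eigenvalue (H_mat (C_mat m) t2) k}"
      unfolding eig_det using P1 by simp
  qed
  with P1 show ?thesis by blast
qed

end
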